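(* Consider a population model with two biallelic causal variants (alleles $A_1,A_2$ and $B_1,B_2$) and a biallelic marker (alleles $M_1,M_2$), with ordered genotypes, in which the marker is in linkage disequilibrium with the first causal variant and in linkage equilibrium with the second causal variant, and Hardy–Weinberg equilibrium holds. Let $\pi\in(0,1)$ be the probability that a random individual is a case and $\pi_{kl}$ the probability of being a case given ordered genotype $(A_k,A_l)$ at the first causal variant, with $\pi_{12}=\pi_{21}$. Then \[ \frac{q_1^U-q_1^A}{\sqrt{q_1q_2}} \;=\; \Delta\,\frac{p_1^U-p_1^A}{\sqrt{p_1p_2}}, \qquad \Delta:=\frac{D_{11}}{\sqrt{p_1p_2q_1q_2}},\quad D_{11}=\mathrm{P}(A_1M_1)-p_1q_1 . \]
   Context: A random individual is drawn from a population. Each individual carries two ordered haplotypes, and at each of three loci (first causal variant with alleles $A_1,A_2$; second causal variant with alleles $B_1,B_2$; marker with alleles $M_1,M_2$) has an ordered genotype. The individual is a case (event $A$) or a control (event $U$). $p_i\in(0,1)$, $q_k\in(0,1)$ are the population frequencies of alleles $A_i$ and $M_k$ ($p_2=1-p_1$, $q_2=1-q_1$), and $\mathrm{P}(A_1M_1)$ the population frequency of haplotype $(A_1,M_1)$. $q_1^A,q_1^U$ are the frequencies of allele $M_1$ among cases and among controls, and $p_1^A,p_1^U$ the frequencies of allele $A_1$ among cases and among controls (allele frequency among a group $=$ probability of homozygous genotype plus half the probabilities of the two ordered heterozygous genotypes, within that group). The marker is not causal: given the genotypes at the two causal variants, case/control status is independent of the marker genotype. Linkage equilibrium of the marker with the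 second causal variant means that, given the genotype at the first causal variant, the marker genotype is independent of the genotype at the second causal variant. Hardy–Weinberg equilibrium means the two haplotypes of an individual are independent. *)

theory Defs
  imports "HOL-Probability.Probability"
begin

datatype allele = al1 | al2

text \<open>A haplotype carries one allele at each of the three loci:
  (first causal variant A, second causal variant B, marker M).\<close>
type_synonym haplotype = "allele \<times> allele \<times> allele"

text \<open>An individual: two ordered haplotypes, and status (True = case, False = control).\<close>
type_synonym indiv = "(haplotype \<times> haplotype) \<times> bool"

definition hap1 :: "indiv \<Rightarrow> haplotype" where "hap1 w = fst (fst w)"
definition hap2 :: "indiv \<Rightarrow> haplotype" where "hap2 w = snd (fst w)"

definition locA :: "haplotype \<Rightarrow> allele" where "locA h = fst h"
definition locB :: "haplotype \<Rightarrow> allele" where "locB h = fst (snd h)"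
definition locM :: "haplotype \<Rightarrow> allele" where "locM h = snd (snd h)"

definition gA :: "indiv \<Rightarrow> allele \<times> allele" where "gA w = (locA (hap1 w), locA (hap2 w))"
definition gB :: "indiv \<Rightarrow> allele \<times> allele" where "gB w = (locB (hap1 w), locB (hap2 w))"
definition gM :: "indiv \<Rightarrow> allele \<times> allele" where "gM w = (locM (hap1 w), locM (hap2 w))"

definition caseEv :: "indiv set" where "caseEv = {w. snd w}"
definition ctrlEv :: "indiv set" where "ctrlEv = {w. \<not> snd w}"

definition Pr :: "indiv pmf \<Rightarrow> indiv set \<Rightarrow> real" where
  "Pr M E = measure_pmf.prob M E"

definition condPr :: "indiv pmf \<Rightarrow> indiv set \<Rightarrow> indiv set \<Rightarrow> real" where
  "condPr M E F = Pr M (E \<inter> F) / Pr M F"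

definition allele1Freq :: "indiv pmf \<Rightarrow> (indiv \<Rightarrow> allele \<times> allele) \<Rightarrow> indiv set \<Rightarrow> real" where
  "allele1Freq M g F =
     condPr M {w. g w = (al1, al1)} F
     + (condPr M {w. g w = (al1, al2)} F + condPr M {w. g w = (al2, al1)} F) / 2"

text \<open>Population frequency of the haplotype (A_1, M_1) (average over the two haplotype slots;
  under Hardy--Weinberg equilibrium both slots have the same haplotype distribution).\<close>
definition hapA1M1Freq :: "indiv pmf \<Rightarrow> real" where
  "hapA1M1Freq M =
     (Pr M {w. locA (hap1 w) = al1 \<and> locM (hap1 w) = al1}
      + Pr M {w. locA (hap2 w) = al1 \<and> locM (hap2 w) = al1}) / 2"

definition HWE :: "indiv pmf \<Rightarrow> bool" where
  "HWE M \<longleftrightarrow> (\<forall>x y. Pr M {w. hap1 w = x \<and> hap2 w = y} = Pr M {w. hap1 w = x} * Pr M {w. hap2 w = y})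
              \<and> (\<forall>x. Pr M {w. hap1 w = x} = Pr M {w. hap2 w = x})"

text \<open>The marker is not causal: given the genotypes at both causal variants, status is
  independent of the marker genotype (conditional independence, product form).\<close>
definition marker_not_causal :: "indiv pmf \<Rightarrow> bool" where
  "marker_not_causal M \<longleftrightarrow> (\<forall>a b m.
     Pr M (caseEv \<inter> {w. gA w = a \<and> gB w = b \<and> gM w = m}) * Pr M {w. gA w = a \<and> gB w = b}
     = Pr M (caseEv \<inter> {w. gA w = a \<and> gB w = b}) * Pr M {w. gA w = a \<and> gB w = b \<and> gM w = m})"

text \<open>Linkage equilibrium of marker and second causal variant: given the genotype at the first
  causal variant, the marker genotype is independent of the genotype at the second one.\<close>
definition marker_LE_B :: "indiv pmf \<Rightarrow> bool" where
  "marker_LE_B M \<longleftrightarrow> (\<forall>a b m.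
     Pr M {w. gA w = a \<and> gB w = b \<and> gM w = m} * Pr M {w. gA w = a}
     = Pr M {w. gA w = a \<and> gB w = b} * Pr M {w. gA w = a \<and> gM w = m})"

end

theory Submission
  imports Defs
begin

lemma pr_union: "A \<inter> B = {} \<Longrightarrow> Pr M (A \<union> B) = Pr M A + Pr M B"
  unfolding Pr_def by (simp add: measure_pmf.finite_measure_Union)

lemma pr_mono: "A \<subseteq> B \<Longrightarrow> Pr M A \<le> Pr M B"
  unfolding Pr_def by (simp add: measure_pmf.finite_measure_mono)

lemma pr_nonneg: "0 \<le> Pr M A"
  unfolding Pr_def by simp

lemma pr_UNIV: "Pr M UNIV = 1"
  unfolding Pr_def by simp

lemma pr_split: "Pr M E = Pr M (E \<inter> {w. f w = al1}) + Pr M (E \<inter> {w. f w = al2})"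
proof -
  have "E = (E \<inter> {w. f w = al1}) \<union> (E \<inter> {w. f w = al2})"
    using allele.exhaust by auto
  then have "Pr M E = Pr M ((E \<inter> {w. f w = al1}) \<union> (E \<inter> {w. f w = al2}))" by simp
  also have "\<dots> = Pr M (E \<inter> {w. f w = al1}) + Pr M (E \<inter> {w. f w = al2})"
    by (rule pr_union) auto
  finally show ?thesis .
qed

lemma pr_split2: "Pr M E = Pr M (E \<inter> {w. f w = al1 \<and> g w = al1}) + Pr M (E \<inter> {w. f w = al1 \<and> g w = al2})
   + Pr M (E \<inter> {w. f w = al2 \<and> g w = al1}) + Pr M (E \<inter> {w. f w = al2 \<and> g w = al2})"
proof -
  have "Pr M E = Pr M (E \<inter> {w. f w = al1}) + Pr M (E \<inter> {w. f w = al2})" by (rule pr_split)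
  also have "Pr M (E \<inter> {w. f w = al1}) = Pr M (E \<inter> {w. f w = al1} \<inter> {w. g w = al1}) + Pr M (E \<inter> {w. f w = al1} \<inter> {w. g w = al2})" by (rule pr_split)
  also have "Pr M (E \<inter> {w. f w = al2}) = Pr M (E \<inter> {w. f w = al2} \<inter> {w. g w = al1}) + Pr M (E \<inter> {w. f w = al2} \<inter> {w. g w = al2})" by (rule pr_split)
  finally show ?thesis by (simp add: Int_def conj_assoc)
qed

lemma pr_case_ctrl: "Pr M X = Pr M (caseEv \<inter> X) + Pr M (ctrlEv \<inter> X)"
proof -
  have "X = (caseEv \<inter> X) \<union> (ctrlEv \<inter> X)" by (auto simp: caseEv_def ctrlEv_def)
  then have "Pr M X = Pr M ((caseEv \<inter> X) \<union> (ctrlEv \<inter> X))" by simp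
  also have "\<dots> = Pr M (caseEv \<inter> X) + Pr M (ctrlEv \<inter> X)"
    by (rule pr_union) (auto simp: caseEv_def ctrlEv_def)
  finally show ?thesis .
qed

lemma real_step:
  fixes c cab ab abm a am :: real
  assumes "0 \<le> c" "c \<le> ab" "0 \<le> cab" "cab \<le> ab"
    and nc: "c * ab = cab * abm" and le: "abm * a = ab * am"
  shows "c * a = cab * am"
proof (cases "ab = 0")
  case True
  then show ?thesis using assms by simp
next
  case False
  have "c * a * ab = cab * ab * am" using nc le
    by (metis mult.assoc mult.commute)
  then show ?thesis using False by simp
qed

lemma step1_b:
  assumes nc: "marker_not_causal M" and le: "marker_LE_B M"
  shows "Pr M (caseEv \<inter> {w. gA w = a \<and> gB w = b \<and> gM w = m}) * Pr M {w. gA w = a}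
       = Pr M (caseEv \<inter> {w. gA w = a \<and> gB w = b}) * Pr M {w. gA w = a \<and> gM w = m}"
proof (rule real_step[OF pr_nonneg _ pr_nonneg])
  show "Pr M (caseEv \<inter> {w. gA w = a \<and> gB w = b \<and> gM w = m}) \<le> Pr M {w. gA w = a \<and> gB w = b}"
    by (rule pr_mono) auto
  show "Pr M (caseEv \<inter> {w. gA w = a \<and> gB w = b}) \<le> Pr M {w. gA w = a \<and> gB w = b}"
    by (rule pr_mono) auto
  show "Pr M (caseEv \<inter> {w. gA w = a \<and> gB w = b \<and> gM w = m}) * Pr M {w. gA w = a \<and> gB w = b} =
    Pr M (caseEv \<inter> {w. gA w = a \<and> gB w = b}) * Pr M {w. gA w = a \<and> gB w = b \<and> gM w = m}"
    using nc unfolding marker_not_causal_def by blast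
  show "Pr M {w. gA w = a \<and> gB w = b \<and> gM w = m} * Pr M {w. gA w = a} =
    Pr M {w. gA w = a \<and> gB w = b} * Pr M {w. gA w = a \<and> gM w = m}"
    using le unfolding marker_LE_B_def by blast
qed

lemma step1:
  assumes nc: "marker_not_causal M" and le: "marker_LE_B M"
  shows "Pr M (caseEv \<inter> {w. gA w = a \<and> gM w = m}) * Pr M {w. gA w = a}
       = Pr M (caseEv \<inter> {w. gA w = a}) * Pr M {w. gA w = a \<and> gM w = m}"
proof -
  let ?f = "\<lambda>w. locB (hap1 w)" and ?g = "\<lambda>w. locB (hap2 w)"
  have e: "E \<inter> {w. ?f w = x \<and> ?g w = y} = E \<inter> {w. gB w = (x, y)}" for E x y
    by (auto simp: gB_def)
  have s: "Pr M E = Pr M (E \<inter> {w. gB w = (al1,al1)}) + Pr M (E \<inter> {w. gB w = (al1,al2)})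
    + Pr M (E \<inter> {w. gB w = (al2,al1)}) + Pr M (E \<inter> {w. gB w = (al2,al2)})" for E
    using pr_split2[of M E ?f ?g] unfolding e .
  have i1: "caseEv \<inter> {w. gA w = a \<and> gM w = m} \<inter> {w. gB w = b} = caseEv \<inter> {w. gA w = a \<and> gB w = b \<and> gM w = m}" for b
    by auto
  have i2: "caseEv \<inter> {w. gA w = a} \<inter> {w. gB w = b} = caseEv \<inter> {w. gA w = a \<and> gB w = b}" for b
    by auto
  have "Pr M (caseEv \<inter> {w. gA w = a \<and> gM w = m}) * Pr M {w. gA w = a}
     = (\<Sum>b\<in>{(al1,al1),(al1,al2),(al2,al1),(al2,al2)}. Pr M (caseEv \<inter> {w. gA w = a \<and> gB w = b \<and> gM w = m}) * Pr M {w. gA w = a})"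
    by (subst s) (simp add: i1 algebra_simps)
  also have "\<dots> = (\<Sum>b\<in>{(al1,al1),(al1,al2),(al2,al1),(al2,al2)}. Pr M (caseEv \<inter> {w. gA w = a \<and> gB w = b}) * Pr M {w. gA w = a \<and> gM w = m})"
    using step1_b[OF nc le] by simp
  also have "\<dots> = Pr M (caseEv \<inter> {w. gA w = a}) * Pr M {w. gA w = a \<and> gM w = m}"
    by (subst (2) s) (simp add: i2 algebra_simps)
  finally show ?thesis .
qed


lemma pr_split_gA: "Pr M E = Pr M (E \<inter> {w. gA w = (al1,al1)}) + Pr M (E \<inter> {w. gA w = (al1,al2)})
    + Pr M (E \<inter> {w. gA w = (al2,al1)}) + Pr M (E \<inter> {w. gA w = (al2,al2)})"
proof -
  have e: "E \<inter> {w. locA (hap1 w) = x \<and> locA (hap2 w) = y} = E \<inter> {w. gA w = (x, y)}" for x y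
    by (auto simp: gA_def)
  show ?thesis using pr_split2[of M E "\<lambda>w. locA (hap1 w)" "\<lambda>w. locA (hap2 w)"] unfolding e .
qed

lemma pr_split_gM: "Pr M E = Pr M (E \<inter> {w. gM w = (al1,al1)}) + Pr M (E \<inter> {w. gM w = (al1,al2)})
    + Pr M (E \<inter> {w. gM w = (al2,al1)}) + Pr M (E \<inter> {w. gM w = (al2,al2)})"
proof -
  have e: "E \<inter> {w. locM (hap1 w) = x \<and> locM (hap2 w) = y} = E \<inter> {w. gM w = (x, y)}" for x y
    by (auto simp: gM_def)
  show ?thesis using pr_split2[of M E "\<lambda>w. locM (hap1 w)" "\<lambda>w. locM (hap2 w)"] unfolding e .
qed

lemma hap_eq: "(h = (k, x, m)) \<longleftrightarrow> (locA h = k \<and> locB h = x \<and> locM h = m)"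
  by (cases h) (auto simp: locA_def locB_def locM_def)

lemma H_hap1: "Pr M {w. locA (hap1 w) = k \<and> locM (hap1 w) = m}
   = Pr M {w. hap1 w = (k, al1, m)} + Pr M {w. hap1 w = (k, al2, m)}"
proof -
  have "Pr M {w. locA (hap1 w) = k \<and> locM (hap1 w) = m} =
     Pr M ({w. locA (hap1 w) = k \<and> locM (hap1 w) = m} \<inter> {w. locB (hap1 w) = al1})
   + Pr M ({w. locA (hap1 w) = k \<and> locM (hap1 w) = m} \<inter> {w. locB (hap1 w) = al2})"
    by (rule pr_split)
  moreover have e: "{w. locA (hap1 w) = k \<and> locM (hap1 w) = m} \<inter> {w. locB (hap1 w) = x} = {w. hap1 w = (k, x, m)}" for x
    by (auto simp: hap_eq)
  ultimately show ?thesis by (simp only: e)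
qed

lemma H_hap2: "Pr M {w. locA (hap2 w) = k \<and> locM (hap2 w) = m}
   = Pr M {w. hap2 w = (k, al1, m)} + Pr M {w. hap2 w = (k, al2, m)}"
proof -
  have "Pr M {w. locA (hap2 w) = k \<and> locM (hap2 w) = m} =
     Pr M ({w. locA (hap2 w) = k \<and> locM (hap2 w) = m} \<inter> {w. locB (hap2 w) = al1})
   + Pr M ({w. locA (hap2 w) = k \<and> locM (hap2 w) = m} \<inter> {w. locB (hap2 w) = al2})"
    by (rule pr_split)
  moreover have e: "{w. locA (hap2 w) = k \<and> locM (hap2 w) = m} \<inter> {w. locB (hap2 w) = x} = {w. hap2 w = (k, x, m)}" for x
    by (auto simp: hap_eq)
  ultimately show ?thesis by (simp only: e)
qed

lemma H_same:
  assumes "HWE M"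
  shows "Pr M {w. locA (hap2 w) = k \<and> locM (hap2 w) = m} = Pr M {w. locA (hap1 w) = k \<and> locM (hap1 w) = m}"
  using assms unfolding HWE_def H_hap1 H_hap2 by simp

lemma J_eq:
  assumes hwe: "HWE M"
  shows "Pr M {w. gA w = (k, l) \<and> gM w = (m, n)} =
    Pr M {w. locA (hap1 w) = k \<and> locM (hap1 w) = m} * Pr M {w. locA (hap1 w) = l \<and> locM (hap1 w) = n}"
proof -
  let ?E = "{w. gA w = (k, l) \<and> gM w = (m, n)}"
  have e: "?E \<inter> {w. locB (hap1 w) = x \<and> locB (hap2 w) = y} = {w. hap1 w = (k, x, m) \<and> hap2 w = (l, y, n)}" for x y
    by (auto simp: gA_def gM_def hap_eq)
  have ind: "Pr M {w. hap1 w = u \<and> hap2 w = v} = Pr M {w. hap1 w = u} * Pr M {w. hap2 w = v}" for u v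
    using hwe unfolding HWE_def by blast
  have "Pr M ?E = (Pr M {w. hap1 w = (k, al1, m)} + Pr M {w. hap1 w = (k, al2, m)}) *
      (Pr M {w. hap2 w = (l, al1, n)} + Pr M {w. hap2 w = (l, al2, n)})"
    using pr_split2[of M ?E "\<lambda>w. locB (hap1 w)" "\<lambda>w. locB (hap2 w)"] unfolding e ind
    by (simp add: algebra_simps)
  also have "\<dots> = Pr M {w. locA (hap1 w) = k \<and> locM (hap1 w) = m} * Pr M {w. locA (hap2 w) = l \<and> locM (hap2 w) = n}"
    by (simp add: H_hap1 H_hap2)
  finally show ?thesis using H_same[OF hwe] by simp
qed

lemma alg:
  fixes h11 h12 h21 h22 f11 f12 f21 f22 :: real
  assumes s: "h11+h12+h21+h22 = 1"
  shows "((f11*(h11*h11 + (h11*h12 + h12*h11)/2) + f12*(h11*h21 + (h11*h22+h12*h21)/2)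
        + f21*(h21*h11 + (h21*h12+h22*h11)/2) + f22*(h21*h21 + (h21*h22+h22*h21)/2))
        - (h11+h21) * (f11*(h11+h12)*(h11+h12) + f12*(h11+h12)*(h21+h22) + f21*(h21+h22)*(h11+h12) + f22*(h21+h22)*(h21+h22)))
       * ((h11+h12)*(h21+h22))
     = (h11 - (h11+h12)*(h11+h21)) *
       ((f11*(h11+h12)*(h11+h12) + (f12*(h11+h12)*(h21+h22) + f21*(h21+h22)*(h11+h12))/2)
        - (h11+h12) * (f11*(h11+h12)*(h11+h12) + f12*(h11+h12)*(h21+h22) + f21*(h21+h22)*(h11+h12) + f22*(h21+h22)*(h21+h22)))"
proof -
  have "h22 = 1 - h11 - h12 - h21" using s by simp
  then show ?thesis by (simp only:) (simp add: field_simps)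
qed

theorem mainTheorem3:
  fixes M :: "indiv pmf"
  defines "p1 \<equiv> allele1Freq M gA UNIV"
      and "q1 \<equiv> allele1Freq M gM UNIV"
      and "p1A \<equiv> allele1Freq M gA caseEv"
      and "p1U \<equiv> allele1Freq M gA ctrlEv"
      and "q1A \<equiv> allele1Freq M gM caseEv"
      and "q1U \<equiv> allele1Freq M gM ctrlEv"
      and "D11 \<equiv> hapA1M1Freq M - allele1Freq M gA UNIV * allele1Freq M gM UNIV"
      and "\<pi> \<equiv> Pr M caseEv"
      and "\<pi>kl \<equiv> (\<lambda>k l. condPr M caseEv {w. gA w = (k, l)})"
  assumes hwe: "HWE M"
      and not_causal: "marker_not_causal M"
      and LE: "marker_LE_B M"
      and LD: "D11 \<noteq> 0"
      and pi_pos: "0 < \<pi>" and pi_lt1: "\<pi> < 1"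
      and pi_sym: "\<pi>kl al1 al2 = \<pi>kl al2 al1"
      and p1_pos: "0 < p1" and p1_lt1: "p1 < 1"
      and q1_pos: "0 < q1" and q1_lt1: "q1 < 1"
  shows "(q1U - q1A) / sqrt (q1 * (1 - q1))
         = (D11 / sqrt (p1 * (1 - p1) * q1 * (1 - q1))) * ((p1U - p1A) / sqrt (p1 * (1 - p1)))"
proof -
  define H where "H k m = Pr M {w. locA (hap1 w) = k \<and> locM (hap1 w) = m}" for k m
  define Pa where "Pa k l = Pr M {w. gA w = (k, l)}" for k l
  define C where "C k l = Pr M (caseEv \<inter> {w. gA w = (k, l)})" for k l
  define f where "f k l = C k l / Pa k l" for k l
  define PP where "PP k = H k al1 + H k al2" for k
  define QQ where "QQ m = H al1 m + H al2 m" for m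
  have J: "Pr M {w. gA w = (k, l) \<and> gM w = (m, n)} = H k m * H l n" for k l m n
    unfolding H_def by (rule J_eq[OF hwe])
  have PaE: "Pa k l = PP k * PP l" for k l
  proof -
    have i: "{w. gA w = (k, l)} \<inter> {w. gM w = (x, y)} = {w. gA w = (k, l) \<and> gM w = (x, y)}" for x y by auto
    show ?thesis unfolding Pa_def PP_def
      by (subst pr_split_gM) (simp only: i J, simp add: algebra_simps)
  qed
  have PM: "Pr M {w. gM w = (m, n)} = QQ m * QQ n" for m n
  proof -
    have i: "{w. gM w = (m, n)} \<inter> {w. gA w = (x, y)} = {w. gA w = (x, y) \<and> gM w = (m, n)}" for x y by auto
    show ?thesis unfolding QQ_def
      by (subst pr_split_gA) (simp only: i J, simp add: algebra_simps)
  qed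
  have sumH: "H al1 al1 + H al1 al2 + H al2 al1 + H al2 al2 = 1"
  proof -
    have e: "UNIV \<inter> {w. locA (hap1 w) = x \<and> locM (hap1 w) = y} = {w. locA (hap1 w) = x \<and> locM (hap1 w) = y}" for x y
      by simp
    show ?thesis using pr_split2[of M UNIV "\<lambda>w. locA (hap1 w)" "\<lambda>w. locM (hap1 w)"]
      unfolding e pr_UNIV H_def by simp
  qed
  have cUNIV: "condPr M E UNIV = Pr M E" for E
    unfolding condPr_def by (simp add: pr_UNIV)
  have p1E: "p1 = PP al1"
  proof -
    have "p1 = Pa al1 al1 + (Pa al1 al2 + Pa al2 al1) / 2"
      unfolding p1_def allele1Freq_def cUNIV Pa_def by simp
    also have "\<dots> = PP al1 * (PP al1 + PP al2)" unfolding PaE by (simp add: algebra_simps)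
    also have "PP al1 + PP al2 = 1" using sumH unfolding PP_def by simp
    finally show ?thesis by simp
  qed
  have p2E: "PP al2 = 1 - p1"
    using sumH unfolding p1E PP_def by simp
  have q1E: "q1 = QQ al1"
  proof -
    have "q1 = QQ al1 * QQ al1 + (QQ al1 * QQ al2 + QQ al2 * QQ al1) / 2"
      unfolding q1_def allele1Freq_def cUNIV PM by simp
    also have "\<dots> = QQ al1 * (QQ al1 + QQ al2)" by (simp add: algebra_simps)
    also have "QQ al1 + QQ al2 = 1" using sumH unfolding QQ_def by simp
    finally show ?thesis by simp
  qed
  have PPpos: "PP k > 0" for k
    using p1_pos p1_lt1 p1E p2E by (cases k) auto
  have Papos: "Pa k l > 0" for k l
    unfolding PaE using PPpos by simp
  have CE: "C k l = f k l * PP k * PP l" for k l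
    unfolding f_def using PPpos[of k] PPpos[of l] PaE[of k l] by simp
  have CJ: "Pr M (caseEv \<inter> {w. gA w = (k, l) \<and> gM w = (m, n)}) = f k l * H k m * H l n" for k l m n
  proof -
    have "Pr M (caseEv \<inter> {w. gA w = (k, l) \<and> gM w = (m, n)}) * Pa k l = C k l * (H k m * H l n)"
      using step1[OF not_causal LE, of "(k, l)" "(m, n)"] unfolding Pa_def C_def J .
    then show ?thesis using Papos[of k l] unfolding f_def by (simp add: field_simps)
  qed
  have CM: "Pr M (caseEv \<inter> {w. gM w = (m, n)}) =
     f al1 al1 * H al1 m * H al1 n + f al1 al2 * H al1 m * H al2 n
   + f al2 al1 * H al2 m * H al1 n + f al2 al2 * H al2 m * H al2 n" for m n
  proof -
    have i: "caseEv \<inter> {w. gM w = (m, n)} \<inter> {w. gA w = (x, y)} = caseEv \<inter> {w. gA w = (x, y) \<and> gM w = (m, n)}" for x y by auto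
    show ?thesis by (subst pr_split_gA) (simp only: i CJ)
  qed
  have piE: "\<pi> = f al1 al1 * PP al1 * PP al1 + f al1 al2 * PP al1 * PP al2
     + f al2 al1 * PP al2 * PP al1 + f al2 al2 * PP al2 * PP al2"
  proof -
    have i: "caseEv \<inter> {w. gA w = (x, y)} = caseEv \<inter> {w. gA w = (x, y)}" for x y by auto
    show ?thesis unfolding \<pi>_def by (subst pr_split_gA) (simp only: C_def[symmetric] CE)
  qed
  have ctrl: "Pr M (ctrlEv \<inter> X) = Pr M X - Pr M (caseEv \<inter> X)" for X
    using pr_case_ctrl[of M X] by simp
  have pictrl: "Pr M ctrlEv = 1 - \<pi>"
    using ctrl[of UNIV] unfolding \<pi>_def pr_UNIV by simp
  define X where "X = Pr M (caseEv \<inter> {w. gM w = (al1, al1)})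
     + (Pr M (caseEv \<inter> {w. gM w = (al1, al2)}) + Pr M (caseEv \<inter> {w. gM w = (al2, al1)})) / 2"
  define Y where "Y = C al1 al1 + (C al1 al2 + C al2 al1) / 2"
  have q1AE: "q1A = X / \<pi>"
    unfolding q1A_def allele1Freq_def condPr_def X_def \<pi>_def by (simp add: Int_commute add_divide_distrib)
  have p1AE: "p1A = Y / \<pi>"
    unfolding p1A_def allele1Freq_def condPr_def Y_def C_def \<pi>_def by (simp add: Int_commute add_divide_distrib)
  have q1U0: "q1 = Pr M {w. gM w = (al1, al1)}
     + (Pr M {w. gM w = (al1, al2)} + Pr M {w. gM w = (al2, al1)}) / 2"
    unfolding q1_def allele1Freq_def cUNIV by simp
  have p1U0: "p1 = Pa al1 al1 + (Pa al1 al2 + Pa al2 al1) / 2"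
    unfolding p1_def allele1Freq_def cUNIV Pa_def by simp
  have q1UE: "q1U = (q1 - X) / (1 - \<pi>)"
  proof -
    have "q1U = (Pr M (ctrlEv \<inter> {w. gM w = (al1, al1)})
     + (Pr M (ctrlEv \<inter> {w. gM w = (al1, al2)}) + Pr M (ctrlEv \<inter> {w. gM w = (al2, al1)})) / 2) / Pr M ctrlEv"
      unfolding q1U_def allele1Freq_def condPr_def by (simp add: Int_commute add_divide_distrib)
    also have "Pr M (ctrlEv \<inter> {w. gM w = (al1, al1)})
     + (Pr M (ctrlEv \<inter> {w. gM w = (al1, al2)}) + Pr M (ctrlEv \<inter> {w. gM w = (al2, al1)})) / 2 = q1 - X"
      unfolding ctrl q1U0 X_def by (simp add: algebra_simps diff_divide_distrib)
    finally show ?thesis unfolding pictrl .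
  qed
  have p1UE: "p1U = (p1 - Y) / (1 - \<pi>)"
  proof -
    have "p1U = (Pr M (ctrlEv \<inter> {w. gA w = (al1, al1)})
     + (Pr M (ctrlEv \<inter> {w. gA w = (al1, al2)}) + Pr M (ctrlEv \<inter> {w. gA w = (al2, al1)})) / 2) / Pr M ctrlEv"
      unfolding p1U_def allele1Freq_def condPr_def by (simp add: Int_commute add_divide_distrib)
    also have "Pr M (ctrlEv \<inter> {w. gA w = (al1, al1)})
     + (Pr M (ctrlEv \<inter> {w. gA w = (al1, al2)}) + Pr M (ctrlEv \<inter> {w. gA w = (al2, al1)})) / 2 = p1 - Y"
      unfolding ctrl p1U0 Y_def C_def Pa_def by (simp add: algebra_simps diff_divide_distrib)
    finally show ?thesis unfolding pictrl .
  qed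
  have hapE: "hapA1M1Freq M = H al1 al1"
    unfolding hapA1M1Freq_def H_def using H_same[OF hwe, of al1 al1] by simp
  have D11E: "D11 = H al1 al1 - p1 * q1"
    unfolding D11_def hapE p1_def[symmetric] q1_def[symmetric] ..
  have key: "(X - q1 * \<pi>) * (p1 * (1 - p1)) = D11 * (Y - p1 * \<pi>)"
  proof -
    have X2: "X = f al1 al1*(H al1 al1*H al1 al1 + (H al1 al1*H al1 al2 + H al1 al2*H al1 al1)/2)
        + f al1 al2*(H al1 al1*H al2 al1 + (H al1 al1*H al2 al2+H al1 al2*H al2 al1)/2)
        + f al2 al1*(H al2 al1*H al1 al1 + (H al2 al1*H al1 al2+H al2 al2*H al1 al1)/2)
        + f al2 al2*(H al2 al1*H al2 al1 + (H al2 al1*H al2 al2+H al2 al2*H al2 al1)/2)"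
      unfolding X_def CM by (simp add: algebra_simps add_divide_distrib)
    have Y2: "Y = f al1 al1*PP al1*PP al1 + (f al1 al2*PP al1*PP al2 + f al2 al1*PP al2*PP al1)/2"
      unfolding Y_def CE ..
    have p2: "1 - p1 = PP al2" using p2E by simp
    show ?thesis
      unfolding X2 Y2 D11E piE q1E p2 unfolding p1E PP_def QQ_def
      by (rule alg[OF sumH])
  qed
  have diff: "q1U - q1A = D11 / (p1 * (1 - p1)) * (p1U - p1A)"
  proof -
    have a: "q1U - q1A = (q1 * \<pi> - X) / (\<pi> * (1 - \<pi>))"
      unfolding q1UE q1AE using pi_pos pi_lt1 by (simp add: field_simps)
    have b: "p1U - p1A = (p1 * \<pi> - Y) / (\<pi> * (1 - \<pi>))"
      unfolding p1UE p1AE using pi_pos pi_lt1 by (simp add: field_simps)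
    have pp: "p1 * (1 - p1) > 0" using p1_pos p1_lt1 by simp
    have k2: "(q1 * \<pi> - X) * (p1 * (1 - p1)) = D11 * (p1 * \<pi> - Y)"
      using key by algebra
    have "q1 * \<pi> - X = D11 * (p1 * \<pi> - Y) / (p1 * (1 - p1))"
      using k2 pp p1_pos p1_lt1 by (simp add: eq_divide_eq)
    then have "q1 * \<pi> - X = D11 / (p1 * (1 - p1)) * (p1 * \<pi> - Y)"
      by simp
    then show ?thesis unfolding a b by simp
  qed
  have pp: "p1 * (1 - p1) > 0" using p1_pos p1_lt1 by simp
  have qq: "q1 * (1 - q1) > 0" using q1_pos q1_lt1 by simp
  have sq: "sqrt (p1 * (1 - p1) * q1 * (1 - q1)) = sqrt (p1 * (1 - p1)) * sqrt (q1 * (1 - q1))"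
    by (simp add: real_sqrt_mult[symmetric] mult.assoc)
  have sp: "sqrt (p1 * (1 - p1)) * sqrt (p1 * (1 - p1)) = p1 * (1 - p1)"
    using pp by simp
  have spos: "sqrt (p1 * (1 - p1)) > 0" "sqrt (q1 * (1 - q1)) > 0" using pp qq by auto
  have g: "(D11 / (s * s) * (p1U - p1A)) / t = D11 / (s * t) * ((p1U - p1A) / s)"
    if "s > 0" "t > 0" for s t :: real
    using that by (simp add: field_simps)
  show ?thesis
  proof -
    have "D11 / (p1 * (1 - p1)) = D11 / (sqrt (p1 * (1 - p1)) * sqrt (p1 * (1 - p1)))"
      using sp by simp
    then show ?thesis unfolding diff sq using g[OF spos] pp by simp
  qed
qed

end
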